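(* Let $g\ge 2$ and let $C$ be a stable curve of compact type of genus $g$ with irreducible components $X_1,\dots,X_\gamma$, and let $X^{pr}$ be the principal component of $C$. Let $\underline e_1$ be the multidegree with $(e_1)_{X^{pr}}=1$ and $(e_1)_X=0$ for every irreducible component $X\ne X^{pr}$. Then: (i) $\underline e_1$ is the unique $X^{pr}$-quasistable multidegree of total degree $1$ on $C$; equivalently $J^{1,X^{pr}}_C=J^{\underline e_1}_C$; (ii) for every $q\in C$ the line bundle $\alpha^1_C(q)$ has multidegree $\underline e_1$, i.e. $\alpha^1_C$ factors through $J^{\underline e_1}_C\subset J^{1,ss}_C$.
   Context: All curves are connected, projective, reduced, nodal, over an algebraically closed field. $g_C=1-\chi(\mathcal O_C)$. Subcurve: union of irreducible components; $Y'$ is the closure of the complement of $Y$, $k_Y=\#(Y\cap Y')$. A tail is a subcurve $Z$ with $k_Z=1$. Compact type: every node is separating (the intersection of two tails $Z,Z'$, $Z\cap Z'=\{n\}$). Stable: every smooth rational component meets the rest in at least 3 points. For a line bundle $L$ on $C$ with components $X_1,\dots,X_\gamma$, its multidegree is $\underline d=(\deg L|_{X_1},\dots,\deg L|_{X_\gamma})$, total degree $d=\sum d_i$, and $d_Y:=\sum_{X_i\subseteq Y}d_i$. $J^{\underline d}_C$ is the locus of line bundles of multidegree $\underline d$; for $C$ of compact type, restriction gives $J^{\underline d}_C\cong\prod_i J^{d_i}_{X_i}$. $\omega_C$ is the dualizing sheaf, $\deg\omega_C|_Y=2g_Y-2+k_Y$. A multidegree $\underline d$ of total degree $d$ on $C$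 of genus $g\ge2$ is semistable if for every non-empty proper subcurve $Y$: $\left|d_Y-\frac{d}{2g-2}\deg\omega_C|_Y\right|\le \frac{k_Y}{2}$; for an irreducible component $X$, it is $X$-quasistable if it is semistable and moreover $d_Y-\frac{d}{2g-2}\deg\omega_C|_Y>-\frac{k_Y}{2}$ for every proper subcurve $Y\supseteq X$. $J^{1,ss}_C$ (resp. $J^{1,X}_C$) is the union of $J^{\underline d}_C$ over semistable (resp. $X$-quasistable) $\underline d$ of total degree 1. Central/semicentral: a component $X$ is central (resp. semicentral) if each connected component $Z$ of $X'$ has $g_Z<g_C/2$ (resp. $\le g_C/2$). A stable curve of compact type has either exactly one central component, or (exactly when some node is the intersection of two tails of genus $g/2$) no central component and exactly two semicentral ones, which meet. The principal component $X^{pr}$ is the central component in the first case, and a fixed choice of one of the two semicentral components in the second. A tail $Z$ is small if $g_Z<g_C/2$, or $g_Z=g_C/2$ and $X^{pr}\subseteq Z'$. For a tail $Z$ of a compact-type curve with $Z\cap Z'=\{n\}$, $\mathcal O_C(Z)$ is the line bundle with $\mathcal O_C(Z)|_Z\cong\mathcal O_Z(-n)$ and $\mathcal O_C(Z)|_{Z'}\cong\mathcal O_{Z'}(n)$ (equivalently $\mathcal O_{\mathcal C}(Z)|_C$ for any smoothing $\mathcal C$ of $C$). For $q\in C$, let $\mathcal N_q=\mathcal O_C(q)$ if $q$ is a smooth point, and if $q$ is a node with small tail $Z$ at $q$, let $\mathcal N_q$ be the line bundle with $\mathcal N_q|_Z=\mathcal O_Z(q)$, $\mathcal N_q|_{Z'}=\mathcal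 O_{Z'}$. The first Abel map of $C$ is $\alpha^1_C(q):=\mathcal N_q\otimes\bigotimes_{Z\text{ small tail},\,q\in Z}\mathcal O_C(Z)$. *)

theory Defs
  imports Complex_Main
begin

text \<open>
A nodal curve of compact type is modelled by its dual graph: the irreducible
components are the vertices V (a finite set), each node is an edge, i.e. a
two-element set of components, and gen v is the geometric genus of the
component v.  Points of C are recorded by where they lie: a smooth point
lying on component v, or a node.
\<close>

datatype 'v cpoint = Smooth 'v | NodeP "'v set"

definition is_graph :: "'v set \<Rightarrow> 'v set set \<Rightarrow> bool" where
  "is_graph V E \<longleftrightarrow> finite V \<and> V \<noteq> {} \<and> (\<forall>e\<in>E. e \<subseteq> V \<and> card e = 2)"

definition reach :: "'v set set \<Rightarrow> 'v set \<Rightarrow> 'v \<Rightarrow> 'v \<Rightarrow> bool" where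
  "reach F S a b \<longleftrightarrow>
     (a, b) \<in> ({(x, y). x \<in> S \<and> y \<in> S \<and> {x, y} \<in> F})\<^sup>*"

definition connected_sub :: "'v set set \<Rightarrow> 'v set \<Rightarrow> bool" where
  "connected_sub F S \<longleftrightarrow> (\<forall>a\<in>S. \<forall>b\<in>S. reach F S a b)"

definition conn_comps :: "'v set set \<Rightarrow> 'v set \<Rightarrow> 'v set set" where
  "conn_comps E S = {{b \<in> S. reach E S a b} | a. a \<in> S}"

definition compact_type :: "'v set \<Rightarrow> 'v set set \<Rightarrow> bool" where
  "compact_type V E \<longleftrightarrow> is_graph V E \<and> connected_sub E V \<and>
     (\<forall>e\<in>E. \<not> connected_sub (E - {e}) V)"

definition valence :: "'v set set \<Rightarrow> 'v \<Rightarrow> nat" where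
  "valence E v = card {e \<in> E. v \<in> e}"

definition stable :: "'v set \<Rightarrow> 'v set set \<Rightarrow> ('v \<Rightarrow> nat) \<Rightarrow> bool" where
  "stable V E gen \<longleftrightarrow> (\<forall>v\<in>V. gen v = 0 \<longrightarrow> valence E v \<ge> 3)"

definition crossing :: "'v set \<Rightarrow> 'v set set \<Rightarrow> 'v set \<Rightarrow> 'v set set" where
  "crossing V E Y = {e \<in> E. e \<inter> Y \<noteq> {} \<and> e \<inter> (V - Y) \<noteq> {}}"

definition kk :: "'v set \<Rightarrow> 'v set set \<Rightarrow> 'v set \<Rightarrow> int" where
  "kk V E Y = int (card (crossing V E Y))"

text \<open>arithmetic genus g_Y = 1 - chi(O_Y) = sum of g_i - #Y + #(nodes of Y) + 1\<close>
definition genus_sub :: "'v set set \<Rightarrow> ('v \<Rightarrow> nat) \<Rightarrow> 'v set \<Rightarrow> int" where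
  "genus_sub E gen Y = (\<Sum>v\<in>Y. int (gen v)) - int (card Y)
      + int (card {e \<in> E. e \<subseteq> Y}) + 1"

definition genusC :: "'v set \<Rightarrow> 'v set set \<Rightarrow> ('v \<Rightarrow> nat) \<Rightarrow> int" where
  "genusC V E gen = genus_sub E gen V"

definition deg_omega :: "'v set \<Rightarrow> 'v set set \<Rightarrow> ('v \<Rightarrow> nat) \<Rightarrow> 'v set \<Rightarrow> int" where
  "deg_omega V E gen Y = 2 * genus_sub E gen Y - 2 + kk V E Y"

definition subcurve :: "'v set \<Rightarrow> 'v set \<Rightarrow> bool" where
  "subcurve V Y \<longleftrightarrow> Y \<subseteq> V \<and> Y \<noteq> {} \<and> Y \<noteq> V"

definition degY :: "('v \<Rightarrow> int) \<Rightarrow> 'v set \<Rightarrow> int" where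
  "degY d Y = (\<Sum>v\<in>Y. d v)"

definition semistable :: "'v set \<Rightarrow> 'v set set \<Rightarrow> ('v \<Rightarrow> nat) \<Rightarrow> ('v \<Rightarrow> int) \<Rightarrow> bool" where
  "semistable V E gen d \<longleftrightarrow> (\<forall>Y. subcurve V Y \<longrightarrow>
     \<bar>real_of_int (degY d Y) - real_of_int (degY d V) / real_of_int (2 * genusC V E gen - 2)
        * real_of_int (deg_omega V E gen Y)\<bar> \<le> real_of_int (kk V E Y) / 2)"

definition quasistable ::
  "'v set \<Rightarrow> 'v set set \<Rightarrow> ('v \<Rightarrow> nat) \<Rightarrow> 'v \<Rightarrow> ('v \<Rightarrow> int) \<Rightarrow> bool" where
  "quasistable V E gen X d \<longleftrightarrow> semistable V E gen d \<and>
     (\<forall>Y. subcurve V Y \<and> X \<in> Y \<longrightarrow>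
        real_of_int (degY d Y) - real_of_int (degY d V) / real_of_int (2 * genusC V E gen - 2)
          * real_of_int (deg_omega V E gen Y) > - real_of_int (kk V E Y) / 2)"

definition central :: "'v set \<Rightarrow> 'v set set \<Rightarrow> ('v \<Rightarrow> nat) \<Rightarrow> 'v \<Rightarrow> bool" where
  "central V E gen X \<longleftrightarrow> X \<in> V \<and>
     (\<forall>Z \<in> conn_comps E (V - {X}). 2 * genus_sub E gen Z < genusC V E gen)"

definition semicentral :: "'v set \<Rightarrow> 'v set set \<Rightarrow> ('v \<Rightarrow> nat) \<Rightarrow> 'v \<Rightarrow> bool" where
  "semicentral V E gen X \<longleftrightarrow> X \<in> V \<and>
     (\<forall>Z \<in> conn_comps E (V - {X}). 2 * genus_sub E gen Z \<le> genusC V E gen)"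

text \<open>X is (a valid choice of) the principal component\<close>
definition principal :: "'v set \<Rightarrow> 'v set set \<Rightarrow> ('v \<Rightarrow> nat) \<Rightarrow> 'v \<Rightarrow> bool" where
  "principal V E gen X \<longleftrightarrow> central V E gen X \<or>
     ((\<nexists>Y. central V E gen Y) \<and> semicentral V E gen X)"

definition tail :: "'v set \<Rightarrow> 'v set set \<Rightarrow> 'v set \<Rightarrow> bool" where
  "tail V E Z \<longleftrightarrow> subcurve V Z \<and> kk V E Z = 1"

definition tail_node :: "'v set \<Rightarrow> 'v set set \<Rightarrow> 'v set \<Rightarrow> 'v set" where
  "tail_node V E Z = (THE n. crossing V E Z = {n})"

definition small_tail ::
  "'v set \<Rightarrow> 'v set set \<Rightarrow> ('v \<Rightarrow> nat) \<Rightarrow> 'v \<Rightarrow> 'v set \<Rightarrow> bool" where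
  "small_tail V E gen Xpr Z \<longleftrightarrow> tail V E Z \<and>
     (2 * genus_sub E gen Z < genusC V E gen \<or>
      (2 * genus_sub E gen Z = genusC V E gen \<and> Xpr \<in> V - Z))"

text \<open>multidegree of O_C(Z): degree -1 on the component of Z through n,
  +1 on the component of Z' through n, 0 elsewhere\<close>
definition OZ_deg :: "'v set \<Rightarrow> 'v set set \<Rightarrow> 'v set \<Rightarrow> 'v \<Rightarrow> int" where
  "OZ_deg V E Z X = (if X \<in> tail_node V E Z then (if X \<in> Z then -1 else 1) else 0)"

definition valid_point :: "'v set \<Rightarrow> 'v set set \<Rightarrow> 'v cpoint \<Rightarrow> bool" where
  "valid_point V E q = (case q of Smooth v \<Rightarrow> v \<in> V | NodeP e \<Rightarrow> e \<in> E)"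

definition point_on :: "'v cpoint \<Rightarrow> 'v set \<Rightarrow> bool" where
  "point_on q Z = (case q of Smooth v \<Rightarrow> v \<in> Z | NodeP e \<Rightarrow> e \<inter> Z \<noteq> {})"

text \<open>multidegree of N_q: O_C(q) for q smooth; for a node q with small tail Z
  at q, O_Z(q) on Z and trivial on Z'\<close>
definition N_deg ::
  "'v set \<Rightarrow> 'v set set \<Rightarrow> ('v \<Rightarrow> nat) \<Rightarrow> 'v \<Rightarrow> 'v cpoint \<Rightarrow> 'v \<Rightarrow> int" where
  "N_deg V E gen Xpr q X = (case q of
      Smooth v \<Rightarrow> (if X = v then 1 else 0)
    | NodeP e \<Rightarrow>
        (let Z = (THE Z. small_tail V E gen Xpr Z \<and> crossing V E Z = {e})
         in if X \<in> e \<and> X \<in> Z then 1 else 0))"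

definition abel1_deg ::
  "'v set \<Rightarrow> 'v set set \<Rightarrow> ('v \<Rightarrow> nat) \<Rightarrow> 'v \<Rightarrow> 'v cpoint \<Rightarrow> 'v \<Rightarrow> int" where
  "abel1_deg V E gen Xpr q X = N_deg V E gen Xpr q X +
     (\<Sum>Z \<in> {Z. small_tail V E gen Xpr Z \<and> point_on q Z}. OZ_deg V E Z X)"

end

theory Submission
  imports Defs
begin



definition RR :: "'v set set \<Rightarrow> 'v set \<Rightarrow> ('v \<times> 'v) set" where
  "RR F S = {(x, y). x \<in> S \<and> y \<in> S \<and> {x, y} \<in> F}"

lemma reach_RR: "reach F S a b \<longleftrightarrow> (a, b) \<in> (RR F S)\<^sup>*"
  by (simp add: reach_def RR_def)

lemma reach_refl: "reach F S a a" by (simp add: reach_def)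

lemma reach_step: "reach F S a b \<Longrightarrow> b \<in> S \<Longrightarrow> c \<in> S \<Longrightarrow> {b,c} \<in> F \<Longrightarrow> reach F S a c"
  unfolding reach_RR by (erule rtrancl_into_rtrancl) (simp add: RR_def)

lemma reach_edge: "b \<in> S \<Longrightarrow> c \<in> S \<Longrightarrow> {b,c} \<in> F \<Longrightarrow> reach F S b c"
  using reach_step reach_refl by metis

lemma reach_trans: "reach F S a b \<Longrightarrow> reach F S b c \<Longrightarrow> reach F S a c"
  unfolding reach_RR by (rule rtrancl_trans)

lemma RR_conv: "(RR F S)\<inverse> = RR F S"
  by (auto simp: RR_def insert_commute)

lemma reach_sym: "reach F S a b \<Longrightarrow> reach F S b a"
  unfolding reach_RR by (metis RR_conv rtrancl_converseI)

lemma reach_in: "reach F S a b \<Longrightarrow> a \<in> S \<Longrightarrow> b \<in> S"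
  unfolding reach_RR by (induction rule: rtrancl_induct) (auto simp: RR_def)

lemma reach_replace:
  assumes "reach F S a b" "\<And>u v. u\<in>S \<Longrightarrow> v\<in>S \<Longrightarrow> {u,v}\<in>F \<Longrightarrow> reach F' S u v"
  shows "reach F' S a b"
  using assms(1) unfolding reach_RR
proof (induction rule: rtrancl_induct)
  case base then show ?case by simp
next
  case (step y z)
  from step(2) have "y \<in> S" "z \<in> S" "{y,z} \<in> F" by (auto simp: RR_def)
  then have "reach F' S y z" by (rule assms(2))
  then have "(y,z) \<in> (RR F' S)\<^sup>*" by (simp add: reach_RR)
  then show ?case by (rule rtrancl_trans[OF step.IH])
qed

lemma reach_mono: "F \<subseteq> F' \<Longrightarrow> reach F S a b \<Longrightarrow> reach F' S a b"
  using reach_replace[of F S a b F'] by (auto intro: reach_edge)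

lemma reach_monoS: "S \<subseteq> S' \<Longrightarrow> reach F S a b \<Longrightarrow> reach F S' a b"
  unfolding reach_RR by (erule rtrancl_mono[THEN subsetD, rotated]) (auto simp: RR_def)

lemma reach_prefix:
  assumes "reach F S a b"
  shows "reach (F - {e}) S a b \<or> (\<exists>x\<in>e. reach (F - {e}) S a x)"
  using assms unfolding reach_RR
proof (induction rule: rtrancl_induct)
  case base then show ?case by simp
next
  case (step y z)
  show ?case
  proof (cases "{y,z} = e")
    case True
    then show ?thesis using step by (auto simp: reach_RR[symmetric])
  next
    case False
    then have "(y,z) \<in> RR (F - {e}) S" using step by (auto simp: RR_def)
    then show ?thesis using step by (meson rtrancl_into_rtrancl)
  qed
qed

lemma reach_suffix:
  assumes "reach F S a b"
  shows "reach (F - {e}) S a b \<or> (\<exists>x\<in>e. reach (F - {e}) S x b)"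
proof -
  have "reach F S b a" using assms by (rule reach_sym)
  from reach_prefix[OF this, of e] show ?thesis
  proof
    assume "reach (F - {e}) S b a" then show ?thesis using reach_sym by metis
  next
    assume "\<exists>x\<in>e. reach (F - {e}) S b x"
    then obtain x where "x \<in> e" "reach (F - {e}) S b x" by blast
    then show ?thesis using reach_sym by metis
  qed
qed

lemma reach_exit:
  assumes "reach F S a b" "a \<in> A" "b \<notin> A"
  shows "\<exists>x y. x\<in>S \<and> y\<in>S \<and> {x,y}\<in>F \<and> x\<in>A \<and> y\<notin>A"
  using assms unfolding reach_RR
proof (induction rule: rtrancl_induct)
  case base then show ?case by simp
next
  case (step y z)
  then show ?case by (cases "y \<in> A") (auto simp: RR_def)
qed

lemma reach_restrict:
  assumes "reach F S a b" "a \<in> A" "A \<subseteq> S"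
    "\<And>x y. x\<in>A \<Longrightarrow> y \<in> S \<Longrightarrow> {x,y}\<in>F \<Longrightarrow> y\<in>A"
  shows "reach F A a b \<and> b \<in> A"
  using assms(1) unfolding reach_RR
proof (induction rule: rtrancl_induct)
  case base then show ?case using assms by simp
next
  case (step y z)
  then have "z \<in> A" using assms(4) by (auto simp: RR_def)
  then show ?case using step by (auto simp: RR_def intro: rtrancl_into_rtrancl)
qed





locale CT =
  fixes V :: "'v set" and E :: "'v set set" and gen :: "'v \<Rightarrow> nat" and r :: 'v
  assumes ct: "compact_type V E" and st: "stable V E gen"
    and g2: "genusC V E gen \<ge> 2" and rV: "r \<in> V" and pr: "principal V E gen r"
begin

lemma finV: "finite V" using ct by (simp add: compact_type_def is_graph_def)

lemma edgeV: "e \<in> E \<Longrightarrow> e \<subseteq> V" using ct by (simp add: compact_type_def is_graph_def)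

lemma edge_card: "e \<in> E \<Longrightarrow> card e = 2" using ct by (simp add: compact_type_def is_graph_def)

lemma finE: "finite E"
proof -
  have "E \<subseteq> Pow V" using edgeV by auto
  then show ?thesis by (rule finite_subset) (simp add: finV)
qed

lemma edge2: "e \<in> E \<Longrightarrow> \<exists>x y. e = {x,y} \<and> x \<noteq> y \<and> x \<in> V \<and> y \<in> V"
  using edge_card edgeV by (metis card_2_iff insert_subset)

lemma edge_eq: "e \<in> E \<Longrightarrow> a \<in> e \<Longrightarrow> b \<in> e \<Longrightarrow> a \<noteq> b \<Longrightarrow> e = {a,b}"
  using edge2 by blast

lemma conn: "a \<in> V \<Longrightarrow> b \<in> V \<Longrightarrow> reach E V a b"
  using ct by (simp add: compact_type_def connected_sub_def)

lemma sep:
  assumes "e \<in> E" "x \<in> e" "y \<in> e" "x \<noteq> y" "reach (E - {e}) V x y"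
  shows False
proof -
  have exy: "e = {x,y}" using edge_eq assms by blast
  have "connected_sub (E - {e}) V"
    unfolding connected_sub_def
  proof (intro ballI)
    fix a b assume "a \<in> V" "b \<in> V"
    then have "reach E V a b" by (rule conn)
    then show "reach (E - {e}) V a b"
    proof (rule reach_replace)
      fix u v assume uv: "u \<in> V" "v \<in> V" "{u,v} \<in> E"
      show "reach (E - {e}) V u v"
      proof (cases "{u,v} = e")
        case True
        then have "(u = x \<and> v = y) \<or> (u = y \<and> v = x)" using exy assms(4)
          by (metis doubleton_eq_iff)
        then show ?thesis using assms(5) reach_sym[OF assms(5)] by auto
      next
        case False then show ?thesis using uv by (auto intro: reach_edge)
      qed
    qed
  qed
  then show False using ct assms(1) by (simp add: compact_type_def)
qed

definition S :: "'v set \<Rightarrow> 'v set" where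
  "S e = {w \<in> V. \<not> reach (E - {e}) V w r}"

lemma r_notin_S: "r \<notin> S e" by (simp add: S_def reach_refl)

lemma S_sub: "S e \<subseteq> V" by (auto simp: S_def)

lemma S_closed: assumes "a \<in> S e" "reach (E - {e}) V a b" shows "b \<in> S e"
proof -
  have aV: "a \<in> V" using assms by (simp add: S_def)
  have "b \<in> V" using reach_in[OF assms(2) aV] .
  moreover have "\<not> reach (E - {e}) V b r"
  proof
    assume "reach (E - {e}) V b r"
    then have "reach (E - {e}) V a r" using reach_trans[OF assms(2)] by simp
    then show False using assms(1) by (simp add: S_def)
  qed
  ultimately show ?thesis by (simp add: S_def)
qed

lemma S_closed_edge: "a \<in> S e \<Longrightarrow> {a,b} \<in> E \<Longrightarrow> {a,b} \<noteq> e \<Longrightarrow> b \<in> S e"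
proof -
  assume a: "a \<in> S e" "{a,b} \<in> E" "{a,b} \<noteq> e"
  then have "a \<in> V" "b \<in> V" using S_sub edgeV by auto
  then have "reach (E - {e}) V a b" using a by (auto intro: reach_edge)
  then show ?thesis using a S_closed by blast
qed

lemma notS: "y \<in> V \<Longrightarrow> y \<notin> S e \<Longrightarrow> reach (E - {e}) V y r"
  by (simp add: S_def)

lemma S_edge:
  assumes e: "e \<in> E"
  shows "\<exists>x y. e = {x,y} \<and> x \<noteq> y \<and> x \<in> S e \<and> y \<in> V \<and> y \<notin> S e"
proof -
  obtain a b where ab: "e = {a,b}" "a \<noteq> b" "a \<in> V" "b \<in> V" using edge2[OF e] by blast
  have n1: "\<not> (a \<notin> S e \<and> b \<notin> S e)"
  proof
    assume "a \<notin> S e \<and> b \<notin> S e"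
    then have "reach (E - {e}) V a r" "reach (E - {e}) V b r" using ab notS by auto
    then have "reach (E - {e}) V a b" using reach_trans[of "E - {e}" V a r b] reach_sym[of "E - {e}" V b r] by simp
    then show False using sep[OF e] ab by auto
  qed
  have n2: "a \<notin> S e \<or> b \<notin> S e"
  proof -
    have "reach E V a r" using conn ab rV by auto
    from reach_suffix[OF this, of e] show ?thesis
      using ab by (auto simp: S_def)
  qed
  show ?thesis
  proof (cases "a \<in> S e")
    case True
    then show ?thesis using n1 n2 ab by blast
  next
    case False
    then show ?thesis using n1 n2 ab by (metis insert_commute)
  qed
qed

lemma S_unique_lo: "e \<in> E \<Longrightarrow> x \<in> e \<Longrightarrow> x \<in> S e \<Longrightarrow> x' \<in> e \<Longrightarrow> x' \<in> S e \<Longrightarrow> x = x'"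
  using S_edge by blast

lemma S_cross: assumes e: "e \<in> E" shows "crossing V E (S e) = {e}"
proof
  obtain x y where xy: "e = {x,y}" "x \<noteq> y" "x \<in> S e" "y \<in> V" "y \<notin> S e" using S_edge[OF e] by blast
  show "{e} \<subseteq> crossing V E (S e)" using xy e by (auto simp: crossing_def)
  show "crossing V E (S e) \<subseteq> {e}"
  proof
    fix f assume f: "f \<in> crossing V E (S e)"
    then have fE: "f \<in> E" by (simp add: crossing_def)
    obtain a b where ab: "a \<in> f" "a \<in> S e" "b \<in> f" "b \<in> V" "b \<notin> S e"
      using f by (auto simp: crossing_def)
    have "a \<noteq> b" using ab by auto
    then have "f = {a,b}" using edge_eq fE ab by blast
    then show "f \<in> {e}" using S_closed_edge[of a e b] ab fE by auto
  qed
qed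

lemma S_inj: "e \<in> E \<Longrightarrow> f \<in> E \<Longrightarrow> S e = S f \<Longrightarrow> e = f"
  using S_cross by (metis singleton_inject)

lemma S_ne: "e \<in> E \<Longrightarrow> S e \<noteq> {}" using S_edge by blast

lemma S_lo:
  assumes e: "e \<in> E" and x: "x \<in> e" "x \<in> S e" and y: "y \<in> S e"
  shows "reach (E - {e}) V y x"
proof -
  have yV: "y \<in> V" using y S_sub by auto
  have "reach E V y r" using conn yV rV by auto
  from reach_prefix[OF this, of e] show ?thesis
  proof
    assume "reach (E - {e}) V y r" then show ?thesis using y by (simp add: S_def)
  next
    assume "\<exists>z\<in>e. reach (E - {e}) V y z"
    then obtain z where z: "z \<in> e" "reach (E - {e}) V y z" by blast
    then have "z \<in> S e" using S_closed y by blast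
    then have "z = x" using S_unique_lo e x z by blast
    then show ?thesis using z by simp
  qed
qed

lemma cover_aux:
  assumes "finite C"
  shows "C \<subseteq> E \<Longrightarrow> v \<in> V \<Longrightarrow> \<not> reach (E - C) V v r \<Longrightarrow> \<exists>f\<in>C. v \<in> S f"
  using assms
proof (induction C rule: finite_induct)
  case empty
  then show ?case using conn rV by auto
next
  case (insert f C0)
  show ?case
  proof (rule ccontr)
    assume nn: "\<not> (\<exists>f'\<in>insert f C0. v \<in> S f')"
    then have rf: "reach (E - {f}) V v r" using insert.prems by (simp add: S_def)
    have "reach (E - C0) V v r" using insert nn by auto
    have eq: "E - insert f C0 = E - C0 - {f}" by auto
    have fE: "f \<in> E" using insert.prems by auto
    have "reach (E - C0 - {f}) V v r"
    proof -
      from reach_prefix[OF \<open>reach (E - C0) V v r\<close>, of f]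
      show ?thesis
      proof
        assume "\<exists>x\<in>f. reach (E - C0 - {f}) V v x"
        then obtain x where x: "x \<in> f" "reach (E - C0 - {f}) V v x" by blast
        from reach_suffix[OF \<open>reach (E - C0) V v r\<close>, of f]
        show ?thesis
        proof
          assume "\<exists>y\<in>f. reach (E - C0 - {f}) V y r"
          then obtain y where y: "y \<in> f" "reach (E - C0 - {f}) V y r" by blast
          show ?thesis
          proof (cases "x = y")
            case True then show ?thesis using reach_trans[OF x(2)] y(2) by simp
          next
            case False
            have m: "E - C0 - {f} \<subseteq> E - {f}" by auto
            have "reach (E - {f}) V x v" using reach_mono[OF m reach_sym[OF x(2)]] .
            moreover have "reach (E - {f}) V r y" using reach_mono[OF m reach_sym[OF y(2)]] .
            ultimately have "reach (E - {f}) V x y" using rf reach_trans[of "E - {f}" V x v r] reach_trans[of "E - {f}" V x r y] by simp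
            then show ?thesis using sep[OF fE x(1) y(1) False] by blast
          qed
        qed simp
      qed simp
    qed
    then show False using insert.prems eq by simp
  qed
qed

lemma cover:
  assumes "Y \<subseteq> V" "r \<notin> Y" "v \<in> Y"
  shows "\<exists>f\<in>crossing V E Y. v \<in> S f"
proof (rule cover_aux)
  show "finite (crossing V E Y)" using finE by (simp add: crossing_def)
  show "crossing V E Y \<subseteq> E" by (auto simp: crossing_def)
  show "v \<in> V" using assms by auto
  show "\<not> reach (E - crossing V E Y) V v r"
  proof
    assume "reach (E - crossing V E Y) V v r"
    from reach_exit[OF this, of Y] assms obtain x y where
      "x\<in>V" "y\<in>V" "{x,y} \<in> E - crossing V E Y" "x \<in> Y" "y \<notin> Y" by auto
    then show False by (auto simp: crossing_def)
  qed
qed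

lemma up_ex: "X \<in> V \<Longrightarrow> X \<noteq> r \<Longrightarrow> \<exists>u\<in>E. X \<in> u \<and> X \<in> S u"
  using cover[of "{X}" X] by (auto simp: crossing_def)

lemma up_uniq:
  assumes f: "f1 \<in> E" "f2 \<in> E" "X \<in> f1" "X \<in> f2" "X \<in> S f1" "X \<in> S f2"
  shows "f1 = f2"
proof (rule ccontr)
  assume ne: "f1 \<noteq> f2"
  obtain x1 y1 where e1: "f1 = {x1,y1}" "x1 \<noteq> y1" "x1 \<in> S f1" "y1 \<in> V" "y1 \<notin> S f1"
    using S_edge[OF f(1)] by blast
  have "x1 = X" using S_unique_lo f e1 by blast
  have XV: "X \<in> V" using f S_sub by auto
  have "reach (E - {f1}) V y1 r" using notS e1 by auto
  from reach_suffix[OF this, of f2] show False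
  proof
    assume a: "reach (E - {f1} - {f2}) V y1 r"
    have "reach (E - {f2}) V X y1"
      using reach_edge[of X V y1 "E - {f2}"] XV e1 \<open>x1 = X\<close> f ne by auto
    moreover have "reach (E - {f2}) V y1 r" using a reach_mono[of "E - {f1} - {f2}" "E - {f2}"] by auto
    ultimately have "reach (E - {f2}) V X r" by (rule reach_trans)
    then show False using f(6) by (simp add: S_def)
  next
    assume "\<exists>z\<in>f2. reach (E - {f1} - {f2}) V z r"
    then obtain z where z: "z \<in> f2" "reach (E - {f1} - {f2}) V z r" by blast
    have zr: "reach (E - {f1}) V z r" using z reach_mono[of "E - {f1} - {f2}" "E - {f1}"] by auto
    show False
    proof (cases "z = X")
      case True then show ?thesis using zr f(5) by (simp add: S_def)
    next
      case False
      have "f2 = {X, z}" using edge_eq f z False by blast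
      then have "reach (E - {f1}) V X z" using reach_edge[of X V z "E - {f1}"] XV edgeV f ne by auto
      then have "reach (E - {f1}) V X r" using zr by (rule reach_trans)
      then show ?thesis using f(5) by (simp add: S_def)
    qed
  qed
qed

lemma lam1:
  assumes e: "e \<in> E" and f: "f \<in> E" and sub: "f \<subseteq> S e"
  shows "S f \<subseteq> S e"
proof
  fix y assume y: "y \<in> S f"
  show "y \<in> S e"
  proof (rule ccontr)
    assume "y \<notin> S e"
    then have "reach (E - {e}) V y r" using notS y S_sub by auto
    from reach_suffix[OF this, of f] show False
    proof
      assume "reach (E - {e} - {f}) V y r"
      then have "reach (E - {f}) V y r" using reach_mono[of "E - {e} - {f}" "E - {f}"] by auto
      then show False using y by (simp add: S_def)
    next
      assume "\<exists>x\<in>f. reach (E - {e} - {f}) V x r"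
      then obtain x where x: "x \<in> f" "reach (E - {e} - {f}) V x r" by blast
      then have "reach (E - {e}) V x r" using reach_mono[of "E - {e} - {f}" "E - {e}"] by auto
      then show False using x sub by (auto simp: S_def)
    qed
  qed
qed

lemma lam:
  assumes e: "e \<in> E" and f: "f \<in> E" and w: "w \<in> S e" "w \<in> S f"
  shows "S e \<subseteq> S f \<or> S f \<subseteq> S e"
proof (cases "e = f")
  case True then show ?thesis by simp
next
  case ne: False
  have f1: "f \<subseteq> S e \<or> f \<inter> S e = {}"
  proof -
    have "f \<notin> crossing V E (S e)" using S_cross e ne by auto
    then show ?thesis using edgeV[OF f] f by (auto simp: crossing_def)
  qed
  have e1: "e \<subseteq> S f \<or> e \<inter> S f = {}"
  proof -
    have "e \<notin> crossing V E (S f)" using S_cross f ne by auto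
    then show ?thesis using edgeV[OF e] e by (auto simp: crossing_def)
  qed
  show ?thesis
  proof (cases "f \<subseteq> S e")
    case True then show ?thesis using lam1 e f by blast
  next
    case False
    note fd = False
    show ?thesis
    proof (cases "e \<subseteq> S f")
      case True then show ?thesis using lam1 e f by blast
    next
      case False
      then have d1: "f \<inter> S e = {}" and d2: "e \<inter> S f = {}" using f1 e1 fd by auto
      have wV: "w \<in> V" using w S_sub by auto
      have "reach E V w r" using conn wV rV by auto
      from reach_prefix[OF this, of e] show ?thesis
      proof
        assume "reach (E - {e}) V w r" then show ?thesis using w by (simp add: S_def)
      next
        assume "\<exists>x\<in>e. reach (E - {e}) V w x"
        then obtain x where x: "x \<in> e" "reach (E - {e}) V w x" by blast
        from reach_prefix[OF x(2), of f] show ?thesis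
        proof
          assume "reach (E - {e} - {f}) V w x"
          then have a: "reach (E - {f}) V w x" using reach_mono[of "E - {e} - {f}" "E - {f}"] by auto
          have "x \<in> V" using x edgeV e by auto
          then have "reach (E - {f}) V x r" using notS d2 x by auto
          then have "reach (E - {f}) V w r" using a by (rule reach_trans[rotated])
          then show ?thesis using w by (simp add: S_def)
        next
          assume "\<exists>y\<in>f. reach (E - {e} - {f}) V w y"
          then obtain y where y: "y \<in> f" "reach (E - {e} - {f}) V w y" by blast
          then have a: "reach (E - {e}) V w y" using reach_mono[of "E - {e} - {f}" "E - {e}"] by auto
          have "y \<in> V" using y edgeV f by auto
          then have "reach (E - {e}) V y r" using notS d1 y by auto
          then have "reach (E - {e}) V w r" using a by (rule reach_trans[rotated])
          then show ?thesis using w by (simp add: S_def)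
        qed
      qed
    qed
  qed
qed

end





context CT begin

lemma B_uniq:
  assumes f: "f1 \<in> E" "f2 \<in> E" "X \<in> f1" "X \<in> f2" "X \<notin> S f1" "X \<notin> S f2"
    "w \<in> S f1" "w \<in> S f2"
  shows "f1 = f2"
proof -
  have XV: "X \<in> V" using f edgeV by auto
  have "S f1 \<subseteq> S f2 \<or> S f2 \<subseteq> S f1" using lam f by blast
  then show ?thesis
  proof
    assume sub: "S f1 \<subseteq> S f2"
    obtain x where x: "x \<in> f1" "x \<in> S f1" using S_edge[OF f(1)] by blast
    have "f1 \<in> crossing V E (S f2)" using x sub f XV by (auto simp: crossing_def)
    then show ?thesis using S_cross f by auto
  next
    assume sub: "S f2 \<subseteq> S f1"
    obtain x where x: "x \<in> f2" "x \<in> S f2" using S_edge[OF f(2)] by blast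
    have "f2 \<in> crossing V E (S f1)" using x sub f XV by (auto simp: crossing_def)
    then show ?thesis using S_cross f by auto
  qed
qed

lemma B_ex:
  assumes XV: "X \<in> V" and wV: "w \<in> V" and wX: "w \<noteq> X"
    and c: "X = r \<or> (\<exists>u\<in>E. X \<in> u \<and> X \<in> S u \<and> w \<in> S u)"
  shows "\<exists>f\<in>E. X \<in> f \<and> X \<notin> S f \<and> w \<in> S f"
proof -
  define Y where "Y = {y \<in> V - {X}. reach E (V - {X}) w y}"
  have wY: "w \<in> Y" using wV wX by (simp add: Y_def reach_refl)
  have YV: "Y \<subseteq> V" by (auto simp: Y_def)
  have YS: "Y \<subseteq> S u" if u: "u \<in> E" "X \<in> u" "X \<in> S u" "w \<in> S u" for u
  proof
    fix y assume "y \<in> Y"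
    then have "reach E (V - {X}) w y" by (simp add: Y_def)
    then have "reach (E - {u}) (V - {X}) w y"
    proof (rule reach_replace)
      fix a b assume "a \<in> V - {X}" "b \<in> V - {X}" "{a,b} \<in> E"
      moreover then have "{a,b} \<noteq> u" using u by auto
      ultimately show "reach (E - {u}) (V - {X}) a b" by (auto intro: reach_edge)
    qed
    then have "reach (E - {u}) V w y" using reach_monoS[of "V - {X}" V] by auto
    then show "y \<in> S u" using S_closed u by blast
  qed
  have rY: "r \<notin> Y"
  proof (cases "X = r")
    case True then show ?thesis by (simp add: Y_def)
  next
    case False
    then obtain u where "u\<in>E" "X \<in> u" "X \<in> S u" "w \<in> S u" using c by blast
    then show ?thesis using YS r_notin_S by blast
  qed
  obtain f where f: "f \<in> crossing V E Y" "w \<in> S f" using cover[OF YV rY wY] by blast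
  have fE: "f \<in> E" using f by (simp add: crossing_def)
  obtain a b where ab: "a \<in> f" "a \<in> Y" "b \<in> f" "b \<in> V" "b \<notin> Y"
    using f(1) by (auto simp: crossing_def)
  have fab: "f = {a,b}" using edge_eq fE ab by auto
  have bX: "b = X"
  proof (rule ccontr)
    assume "b \<noteq> X"
    then have "reach E (V - {X}) w b"
      using ab reach_step[of E "V - {X}" w a b] fab fE by (auto simp: Y_def)
    then show False using ab \<open>b \<noteq> X\<close> by (auto simp: Y_def)
  qed
  have "X \<notin> S f"
  proof
    assume XS: "X \<in> S f"
    then have "X \<noteq> r" using r_notin_S by auto
    then obtain u where u: "u\<in>E" "X \<in> u" "X \<in> S u" "w \<in> S u" using c by blast
    have "f = u" using up_uniq[OF fE u(1)] XS u ab bX by auto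
    have "a \<in> S u" using YS[OF u] ab by auto
    have "a \<noteq> X" using ab by (auto simp: Y_def)
    then show False using S_unique_lo[OF u(1) _ \<open>a \<in> S u\<close> u(2) u(3)] ab \<open>f = u\<close> by auto
  qed
  then show ?thesis using fE ab bX f by auto
qed

lemma B_none:
  assumes XV: "X \<in> V" and Xr: "X \<noteq> r" and u: "u \<in> E" "X \<in> u" "X \<in> S u" and wu: "w \<notin> S u"
    and f: "f \<in> E" "X \<in> f" "X \<notin> S f" "w \<in> S f"
  shows False
proof -
  have "f \<noteq> u" using f u by auto
  obtain x y where xy: "f = {x,y}" "x \<noteq> y" "x \<in> S f" "y \<in> V" "y \<notin> S f" using S_edge[OF f(1)] by blast
  have "y = X" using xy f by auto
  have "x \<in> S u" using S_closed_edge[of X u x] u f xy \<open>y = X\<close> \<open>f \<noteq> u\<close> by (auto simp: insert_commute)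
  then have "f \<subseteq> S u" using xy \<open>y = X\<close> u by auto
  then have "S f \<subseteq> S u" using lam1 u f by blast
  then show False using f wu by auto
qed

definition oz :: "'v set \<Rightarrow> 'v \<Rightarrow> int" where
  "oz f X = (if X \<in> f then (if X \<in> S f then -1 else 1) else 0)"

lemma sum_bool_card: "finite P \<Longrightarrow> (\<Sum>f\<in>P. (if Q f then 1 else 0::int)) = int (card {f\<in>P. Q f})"
  by (simp add: sum.inter_filter[symmetric])

lemma F8:
  assumes XV: "X \<in> V" and wV: "w \<in> V"
  shows "(\<Sum>f\<in>{f\<in>E. w \<in> S f}. oz f X) = (if X = r then 1 else 0) - (if X = w then 1 else 0)"
proof -
  define P where "P = {f\<in>E. w \<in> S f}"
  have finP: "finite P" using finE by (simp add: P_def)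
  have "(\<Sum>f\<in>P. oz f X) = (\<Sum>f\<in>P. (if X \<in> f \<and> X \<notin> S f then 1 else 0) - (if X \<in> f \<and> X \<in> S f then 1 else 0))"
    by (rule sum.cong) (auto simp: oz_def)
  also have "\<dots> = int (card {f\<in>P. X \<in> f \<and> X \<notin> S f}) - int (card {f\<in>P. X \<in> f \<and> X \<in> S f})"
    by (simp add: sum_subtractf sum_bool_card[OF finP])
  finally have eq: "(\<Sum>f\<in>P. oz f X) = int (card {f\<in>P. X \<in> f \<and> X \<notin> S f}) - int (card {f\<in>P. X \<in> f \<and> X \<in> S f})" .
  have Bsub: "\<forall>f1\<in>{f\<in>P. X \<in> f \<and> X \<notin> S f}. \<forall>f2\<in>{f\<in>P. X \<in> f \<and> X \<notin> S f}. f1 = f2"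
    using B_uniq by (auto simp: P_def)
  have "(\<Sum>f\<in>P. oz f X) = (if X = r then 1 else 0) - (if X = w then 1 else 0)"
  proof (cases "X = r")
    case True
    have A0: "{f\<in>P. X \<in> f \<and> X \<in> S f} = {}" using True r_notin_S by auto
    have "card {f\<in>P. X \<in> f \<and> X \<notin> S f} = (if X = w then 0 else 1)"
    proof (cases "X = w")
      case True
      then have e: "{f\<in>P. X \<in> f \<and> X \<notin> S f} = {}" by (auto simp: P_def)
      show ?thesis unfolding e using True by simp
    next
      case False
      then obtain f where "f\<in>E" "X \<in> f" "X \<notin> S f" "w \<in> S f" using B_ex[OF XV wV] True by metis
      then have "{f\<in>P. X \<in> f \<and> X \<notin> S f} = {f}" using Bsub by (auto simp: P_def)
      then show ?thesis using False by simp
    qed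
    then show ?thesis unfolding eq A0 using True by simp
  next
    case False
    obtain u where u: "u\<in>E" "X \<in> u" "X \<in> S u" using up_ex[OF XV False] by blast
    show ?thesis
    proof (cases "w \<in> S u")
      case True
      have A1: "{f\<in>P. X \<in> f \<and> X \<in> S f} = {u}" using u True up_uniq by (auto simp: P_def)
      have "card {f\<in>P. X \<in> f \<and> X \<notin> S f} = (if X = w then 0 else 1)"
      proof (cases "X = w")
        case True
      then have e: "{f\<in>P. X \<in> f \<and> X \<notin> S f} = {}" by (auto simp: P_def)
      show ?thesis unfolding e using True by simp
      next
        case False
        then obtain f where "f\<in>E" "X \<in> f" "X \<notin> S f" "w \<in> S f" using B_ex[OF XV wV] u \<open>w \<in> S u\<close> by metis
        then have "{f\<in>P. X \<in> f \<and> X \<notin> S f} = {f}" using Bsub by (auto simp: P_def)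
        then show ?thesis using False by simp
      qed
      then show ?thesis unfolding eq A1 using \<open>X \<noteq> r\<close> by simp
    next
      case wn: False
      have A0: "{f\<in>P. X \<in> f \<and> X \<in> S f} = {}" using u wn up_uniq by (auto simp: P_def)
      have B0: "{f\<in>P. X \<in> f \<and> X \<notin> S f} = {}" using B_none[OF XV False u wn] by (auto simp: P_def)
      have "X \<noteq> w" using wn u by auto
      then show ?thesis unfolding eq A0 B0 using \<open>X \<noteq> r\<close> by simp
    qed
  qed
  then show ?thesis by (simp add: P_def)
qed

end





context CT begin

definition wt :: "'v \<Rightarrow> int" where
  "wt v = 2 * int (gen v) - 2 + int (valence E v)"

lemma wt_nonneg: "v \<in> V \<Longrightarrow> 0 \<le> wt v"
  using st unfolding stable_def wt_def
  by (cases "gen v = 0") auto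

lemma card_edge_inter:
  assumes e: "e \<in> E" and Y: "Y \<subseteq> V"
  shows "card (Y \<inter> e) = (if e \<subseteq> Y then 2 else 0) + (if e \<in> crossing V E Y then 1 else 0)"
proof -
  obtain a b where ab: "e = {a,b}" "a \<noteq> b" "a \<in> V" "b \<in> V" using edge2[OF e] by blast
  show ?thesis using ab e by (cases "a \<in> Y"; cases "b \<in> Y") (auto simp: crossing_def)
qed

lemma val_sum:
  assumes Y: "Y \<subseteq> V"
  shows "(\<Sum>v\<in>Y. valence E v) = 2 * card {e\<in>E. e \<subseteq> Y} + card (crossing V E Y)"
proof -
  have finY: "finite Y" using Y finV finite_subset by blast
  have "(\<Sum>v\<in>Y. valence E v) = (\<Sum>v\<in>Y. \<Sum>e\<in>E. if v \<in> e then 1 else 0)"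
    by (rule sum.cong) (auto simp: valence_def sum.inter_filter[OF finE, symmetric])
  also have "\<dots> = (\<Sum>e\<in>E. \<Sum>v\<in>Y. if v \<in> e then 1 else 0)" by (rule sum.swap)
  also have "\<dots> = (\<Sum>e\<in>E. card (Y \<inter> e))"
    by (rule sum.cong) (auto simp: sum.inter_filter[OF finY, symmetric] Int_def)
  also have "\<dots> = (\<Sum>e\<in>E. (if e \<subseteq> Y then 2 else 0) + (if e \<in> crossing V E Y then 1 else 0))"
    by (rule sum.cong) (auto simp: card_edge_inter Y)
  also have "\<dots> = (\<Sum>e\<in>E. if e \<subseteq> Y then 2 else 0) + (\<Sum>e\<in>E. if e \<in> crossing V E Y then 1 else 0)"
    by (simp add: sum.distrib)
  also have "\<dots> = 2 * card {e\<in>E. e \<subseteq> Y} + card {e\<in>E. e \<in> crossing V E Y}"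
    by (simp add: sum.inter_filter[OF finE, symmetric])
  also have "{e\<in>E. e \<in> crossing V E Y} = crossing V E Y" by (auto simp: crossing_def)
  finally show ?thesis .
qed

lemma omega_sum:
  assumes Y: "Y \<subseteq> V"
  shows "deg_omega V E gen Y = (\<Sum>v\<in>Y. wt v)"
proof -
  have "(\<Sum>v\<in>Y. wt v) = (\<Sum>v\<in>Y. 2 * int (gen v)) - (\<Sum>v\<in>Y. 2) + (\<Sum>v\<in>Y. int (valence E v))"
    by (simp add: wt_def sum.distrib sum_subtractf)
  also have "\<dots> = 2 * (\<Sum>v\<in>Y. int (gen v)) - 2 * int (card Y) + int (\<Sum>v\<in>Y. valence E v)"
    by (simp add: sum_distrib_left of_nat_sum)
  also have "\<dots> = 2 * (\<Sum>v\<in>Y. int (gen v)) - 2 * int (card Y) + 2 * int (card {e\<in>E. e \<subseteq> Y}) + int (card (crossing V E Y))"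
    by (simp add: val_sum[OF Y])
  finally show ?thesis by (simp add: deg_omega_def genus_sub_def kk_def)
qed

lemma kk_V: "kk V E V = 0" by (simp add: kk_def crossing_def)

lemma omega_V: "deg_omega V E gen V = 2 * genusC V E gen - 2"
  by (simp add: deg_omega_def genusC_def kk_V)

lemma omega_compl: "Y \<subseteq> V \<Longrightarrow> deg_omega V E gen Y + deg_omega V E gen (V - Y) = 2 * genusC V E gen - 2"
  using omega_sum[of Y] omega_sum[of "V - Y"] omega_sum[of V] omega_V
    sum.subset_diff[of Y V wt] finV by (simp add: Diff_subset)

lemma omega_mono:
  assumes "A \<subseteq> B" "B \<subseteq> V" shows "deg_omega V E gen A \<le> deg_omega V E gen B"
proof -
  have finB: "finite B" using assms finV finite_subset by blast
  have "(\<Sum>v\<in>A. wt v) \<le> (\<Sum>v\<in>B. wt v)"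
    by (rule sum_mono2[OF finB assms(1)]) (use assms wt_nonneg in auto)
  then show ?thesis using omega_sum[of A] omega_sum[of B] assms by simp
qed

lemma omega_nonneg: "Y \<subseteq> V \<Longrightarrow> 0 \<le> deg_omega V E gen Y"
  using omega_sum[of Y] wt_nonneg by (auto intro!: sum_nonneg)

lemma crossing_compl: "Y \<subseteq> V \<Longrightarrow> crossing V E (V - Y) = crossing V E Y"
  using edgeV by (auto simp: crossing_def)

lemma semicentral_r: "semicentral V E gen r"
  using pr by (auto simp: principal_def central_def semicentral_def less_imp_le)

lemma omega_S:
  assumes e: "e \<in> E"
  shows "deg_omega V E gen (S e) \<le> genusC V E gen - 1"
proof -
  obtain x y where xy: "e = {x,y}" "x \<noteq> y" "x \<in> S e" "y \<in> V" "y \<notin> S e" using S_edge[OF e] by blast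
  have xVr: "x \<in> V - {r}" using xy S_sub r_notin_S by blast
  define W where "W = {b \<in> V - {r}. reach E (V - {r}) x b}"
  have "W \<in> conn_comps E (V - {r})" using xVr by (auto simp: conn_comps_def W_def)
  then have gW: "2 * genus_sub E gen W \<le> genusC V E gen" using semicentral_r by (simp add: semicentral_def)
  have WV: "W \<subseteq> V" by (auto simp: W_def)
  have SW: "S e \<subseteq> W"
  proof
    fix z assume z: "z \<in> S e"
    have "reach (E - {e}) V z x" using S_lo e xy z by auto
    then have "reach (E - {e}) (S e) z x"
      using reach_restrict[of "E - {e}" V z x "S e"] z S_sub S_closed_edge by blast
    then have "reach E (V - {r}) z x"
      using reach_monoS[of "S e" "V - {r}"] reach_mono[of "E - {e}" E] S_sub r_notin_S by blast
    then have "reach E (V - {r}) x z" by (rule reach_sym)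
    then show "z \<in> W" using z S_sub r_notin_S by (auto simp: W_def)
  qed
  have crW: "\<exists>a\<in>W. g = {a, r}" if g: "g \<in> crossing V E W" for g
  proof -
    have gE: "g \<in> E" using g by (simp add: crossing_def)
    obtain a b where ab: "a \<in> g" "a \<in> W" "b \<in> g" "b \<in> V" "b \<notin> W" using g by (auto simp: crossing_def)
    have gab: "g = {a,b}" using edge_eq gE ab by auto
    have "b = r"
    proof (rule ccontr)
      assume "b \<noteq> r"
      then have "reach E (V - {r}) x b" using ab reach_step[of E "V - {r}" x a b] gab gE by (auto simp: W_def)
      then show False using ab \<open>b \<noteq> r\<close> by (auto simp: W_def)
    qed
    then show ?thesis using ab gab by auto
  qed
  have "card (crossing V E W) \<le> Suc 0"
  proof (subst card_le_Suc0_iff_eq)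
    show "finite (crossing V E W)" using finE by (simp add: crossing_def)
    show "\<forall>g1\<in>crossing V E W. \<forall>g2\<in>crossing V E W. g1 = g2"
    proof (intro ballI, rule ccontr)
      fix g1 g2 assume g: "g1 \<in> crossing V E W" "g2 \<in> crossing V E W" "g1 \<noteq> g2"
      obtain a1 where a1: "a1 \<in> W" "g1 = {a1, r}" using crW g by blast
      obtain a2 where a2: "a2 \<in> W" "g2 = {a2, r}" using crW g by blast
      have gE: "g1 \<in> E" "g2 \<in> E" using g by (auto simp: crossing_def)
      have xa: "reach E (V - {r}) x a1" "reach E (V - {r}) x a2" using a1 a2 by (auto simp: W_def)
      have "reach E (V - {r}) a1 a2" using reach_trans[OF reach_sym[OF xa(1)] xa(2)] .
      then have "reach (E - {g1}) (V - {r}) a1 a2"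
      proof (rule reach_replace)
        fix u v assume "u \<in> V - {r}" "v \<in> V - {r}" "{u,v} \<in> E"
        moreover then have "{u,v} \<noteq> g1" using a1 by auto
        ultimately show "reach (E - {g1}) (V - {r}) u v" by (auto intro: reach_edge)
      qed
      then have "reach (E - {g1}) V a1 a2" by (rule reach_monoS[rotated]) auto
      moreover have "reach (E - {g1}) V a2 r" using reach_edge[of a2 V r "E - {g1}"] a2 g gE rV WV by auto
      ultimately have "reach (E - {g1}) V a1 r" by (rule reach_trans)
      moreover have "a1 \<noteq> r" using a1 by (auto simp: W_def)
      ultimately show False using sep[OF gE(1)] a1 by auto
    qed
  qed
  then have "kk V E W \<le> 1" by (simp add: kk_def)
  then have "deg_omega V E gen W \<le> genusC V E gen - 1" using gW by (simp add: deg_omega_def)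
  moreover have "deg_omega V E gen (S e) \<le> deg_omega V E gen W" using omega_mono SW WV by blast
  ultimately show ?thesis by simp
qed

lemma kk_S: "e \<in> E \<Longrightarrow> kk V E (S e) = 1" by (simp add: kk_def S_cross)

lemma omega_S_eq: "e \<in> E \<Longrightarrow> deg_omega V E gen (S e) = 2 * genus_sub E gen (S e) - 1"
  by (simp add: deg_omega_def kk_S)

lemma omega_bound:
  assumes Y: "Y \<subseteq> V" and rY: "r \<notin> Y"
  shows "deg_omega V E gen Y \<le> kk V E Y * (genusC V E gen - 1)"
proof -
  define C where "C = crossing V E Y"
  have finC: "finite C" using finE by (simp add: crossing_def C_def)
  have CE: "C \<subseteq> E" by (auto simp: C_def crossing_def)
  have finY: "finite Y" using Y finV finite_subset by blast
  have "deg_omega V E gen Y = (\<Sum>v\<in>Y. wt v)" using omega_sum Y by simp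
  also have "\<dots> \<le> (\<Sum>v\<in>Y. \<Sum>f\<in>C. if v \<in> S f then wt v else 0)"
  proof (rule sum_mono)
    fix v assume v: "v \<in> Y"
    obtain f0 where f0: "f0 \<in> C" "v \<in> S f0" using cover[OF Y rY v] by (auto simp: C_def)
    have "wt v = (if v \<in> S f0 then wt v else 0)" using f0 by simp
    also have "\<dots> \<le> (\<Sum>f\<in>C. if v \<in> S f then wt v else 0)"
      using member_le_sum[of f0 C "\<lambda>f. if v \<in> S f then wt v else 0"] f0 finC wt_nonneg[of v] v Y by auto
    finally show "wt v \<le> (\<Sum>f\<in>C. if v \<in> S f then wt v else 0)" .
  qed
  also have "\<dots> = (\<Sum>f\<in>C. \<Sum>v\<in>Y. if v \<in> S f then wt v else 0)" by (rule sum.swap)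
  also have "\<dots> \<le> (\<Sum>f\<in>C. genusC V E gen - 1)"
  proof (rule sum_mono)
    fix f assume f: "f \<in> C"
    have "(\<Sum>v\<in>Y. if v \<in> S f then wt v else 0) \<le> (\<Sum>v\<in>V. if v \<in> S f then wt v else 0)"
      by (rule sum_mono2) (use finV Y wt_nonneg in auto)
    also have "\<dots> = (\<Sum>v\<in>S f. wt v)"
      using sum.inter_restrict[OF finV, of wt "S f"] S_sub by (simp add: Int_absorb1 Int_commute)
    also have "\<dots> = deg_omega V E gen (S f)" using omega_sum S_sub by simp
    also have "\<dots> \<le> genusC V E gen - 1" using omega_S f CE by auto
    finally show "(\<Sum>v\<in>Y. if v \<in> S f then wt v else 0) \<le> genusC V E gen - 1" .
  qed
  also have "\<dots> = kk V E Y * (genusC V E gen - 1)" by (simp add: kk_def C_def)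
  finally show ?thesis .
qed

end





context CT begin

lemma kk_pos:
  assumes Y: "subcurve V Y" shows "1 \<le> kk V E Y"
proof -
  obtain a b where ab: "a \<in> Y" "b \<in> V" "b \<notin> Y" using Y by (auto simp: subcurve_def)
  have aV: "a \<in> V" using ab Y by (auto simp: subcurve_def)
  obtain x y where "x\<in>V" "y\<in>V" "{x,y}\<in>E" "x\<in>Y" "y\<notin>Y"
    using reach_exit[OF conn[OF aV ab(2)] ab(1) ab(3)] by blast
  then have "{x,y} \<in> crossing V E Y" by (auto simp: crossing_def)
  moreover have "finite (crossing V E Y)" using finE by (simp add: crossing_def)
  ultimately have "card (crossing V E Y) \<noteq> 0" by auto
  then show ?thesis by (simp add: kk_def)
qed

lemma side0:
  assumes Z: "Z \<subseteq> V" "Z \<noteq> {}" "r \<notin> Z" and e: "e \<in> E" and cr: "crossing V E Z = {e}"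
  shows "Z = S e"
proof
  show "Z \<subseteq> S e"
  proof
    fix z assume z: "z \<in> Z"
    show "z \<in> S e"
    proof (rule ccontr)
      assume "z \<notin> S e"
      then have "reach (E - {e}) V z r" using z Z notS by auto
      from reach_exit[OF this z Z(3)] obtain x y where
        "x\<in>V" "y\<in>V" "{x,y}\<in>E - {e}" "x\<in>Z" "y\<notin>Z" by blast
      then have "{x,y} \<in> crossing V E Z" "{x,y} \<noteq> e" by (auto simp: crossing_def)
      then show False using cr by auto
    qed
  qed
  then have ZS: "Z \<subseteq> S e" .
  show "S e \<subseteq> Z"
  proof
    fix y assume y: "y \<in> S e"
    obtain z where z: "z \<in> Z" using Z by auto
    obtain x where x: "x \<in> e" "x \<in> S e" using S_edge[OF e] by blast
    have "reach (E - {e}) V z x" using S_lo[OF e x] ZS z by auto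
    moreover have "reach (E - {e}) V x y" using reach_sym[OF S_lo[OF e x y]] .
    ultimately have zy: "reach (E - {e}) V z y" by (rule reach_trans)
    show "y \<in> Z"
    proof (rule ccontr)
      assume "y \<notin> Z"
      from reach_exit[OF zy z this] obtain a b where
        "a\<in>V" "b\<in>V" "{a,b}\<in>E - {e}" "a\<in>Z" "b\<notin>Z" by blast
      then have "{a,b} \<in> crossing V E Z" "{a,b} \<noteq> e" by (auto simp: crossing_def)
      then show False using cr by auto
    qed
  qed
qed

lemma tail_side:
  assumes Z: "subcurve V Z" and e: "e \<in> E" and cr: "crossing V E Z = {e}"
  shows "Z = S e \<or> Z = V - S e"
proof (cases "r \<in> Z")
  case False
  then show ?thesis using side0 Z e cr by (auto simp: subcurve_def)
next
  case True
  have "V - Z = S e"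
  proof (rule side0)
    show "V - Z \<subseteq> V" "r \<notin> V - Z" using True by auto
    show "V - Z \<noteq> {}" using Z by (auto simp: subcurve_def)
    show "crossing V E (V - Z) = {e}" using crossing_compl Z cr by (auto simp: subcurve_def)
  qed (rule e)
  then show ?thesis using Z by (auto simp: subcurve_def)
qed

lemma S_subcurve: "e \<in> E \<Longrightarrow> subcurve V (S e)"
  using S_sub[of e] S_ne[of e] r_notin_S[of e] rV by (auto simp: subcurve_def)

lemma compl_subcurve: "e \<in> E \<Longrightarrow> subcurve V (V - S e)"
  using S_sub[of e] S_ne[of e] r_notin_S[of e] rV by (auto simp: subcurve_def)

lemma small_iff: "small_tail V E gen r Z \<longleftrightarrow> (\<exists>e\<in>E. Z = S e)"
proof
  assume sm: "small_tail V E gen r Z"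
  then have Z: "subcurve V Z" and k: "kk V E Z = 1" by (auto simp: small_tail_def tail_def)
  then have "card (crossing V E Z) = 1" by (simp add: kk_def)
  then obtain e where cr: "crossing V E Z = {e}" by (auto simp: card_1_singleton_iff)
  then have e: "e \<in> E" by (auto simp: crossing_def)
  have "Z \<noteq> V - S e"
  proof
    assume ZV: "Z = V - S e"
    have "deg_omega V E gen Z = 2 * genusC V E gen - 2 - deg_omega V E gen (S e)"
      using omega_compl[of "S e"] S_sub ZV by simp
    then have "deg_omega V E gen Z \<ge> genusC V E gen - 1" using omega_S[OF e] by simp
    then have "2 * genus_sub E gen Z \<ge> genusC V E gen" using k by (simp add: deg_omega_def)
    moreover have "r \<notin> V - Z" using ZV rV r_notin_S[of e] by auto
    ultimately show False using sm by (auto simp: small_tail_def)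
  qed
  then show "\<exists>e\<in>E. Z = S e" using tail_side[OF Z e cr] e by auto
next
  assume "\<exists>e\<in>E. Z = S e"
  then obtain e where e: "e \<in> E" and Z: "Z = S e" by blast
  have "2 * genus_sub E gen (S e) \<le> genusC V E gen" using omega_S[OF e] omega_S_eq[OF e] by simp
  moreover have "r \<in> V - S e" using rV r_notin_S by auto
  ultimately show "small_tail V E gen r Z"
    using Z S_subcurve[OF e] kk_S[OF e] by (auto simp: small_tail_def tail_def)
qed

lemma tail_node_S: "e \<in> E \<Longrightarrow> tail_node V E (S e) = e"
  by (simp add: tail_node_def S_cross)

lemma OZ_S: "e \<in> E \<Longrightarrow> OZ_deg V E (S e) X = oz e X"
  by (simp add: OZ_deg_def tail_node_S oz_def)

lemma abel_core:
  assumes vV: "v \<in> V" and XV: "X \<in> V"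
  shows "(if X = v then 1 else 0) + (\<Sum>Z\<in>S ` {f\<in>E. v \<in> S f}. OZ_deg V E Z X) = (if X = r then 1 else 0)"
proof -
  have inj: "inj_on S {f\<in>E. v \<in> S f}" using S_inj by (auto simp: inj_on_def)
  have "(\<Sum>Z\<in>S ` {f\<in>E. v \<in> S f}. OZ_deg V E Z X) = (\<Sum>f\<in>{f\<in>E. v \<in> S f}. OZ_deg V E (S f) X)"
    by (rule sum.reindex[OF inj, unfolded comp_def])
  also have "\<dots> = (\<Sum>f\<in>{f\<in>E. v \<in> S f}. oz f X)" by (rule sum.cong) (auto simp: OZ_S)
  also have "\<dots> = (if X = r then 1 else 0) - (if X = v then 1 else 0)" by (rule F8[OF XV vV])
  finally show ?thesis by simp
qed

lemma small_set_smooth: "{Z. small_tail V E gen r Z \<and> point_on (Smooth v) Z} = S ` {f\<in>E. v \<in> S f}"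
  by (auto simp: small_iff point_on_def)

lemma abel_smooth:
  assumes vV: "v \<in> V" and XV: "X \<in> V"
  shows "abel1_deg V E gen r (Smooth v) X = (if X = r then 1 else 0)"
  using abel_core[OF vV XV]
  by (simp add: abel1_deg_def N_deg_def small_set_smooth)

lemma the_small: "e \<in> E \<Longrightarrow> (THE Z. small_tail V E gen r Z \<and> crossing V E Z = {e}) = S e"
proof (rule the_equality)
  assume e: "e \<in> E"
  show "small_tail V E gen r (S e) \<and> crossing V E (S e) = {e}" using small_iff e S_cross by auto
  fix Z assume Z: "small_tail V E gen r Z \<and> crossing V E Z = {e}"
  then obtain f where f: "f \<in> E" "Z = S f" using small_iff by auto
  then have "f = e" using Z S_cross by auto
  then show "Z = S e" using f by simp
qed

lemma abel_node:
  assumes e: "e \<in> E" and XV: "X \<in> V"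
  shows "abel1_deg V E gen r (NodeP e) X = (if X = r then 1 else 0)"
proof -
  obtain x y where xy: "e = {x,y}" "x \<noteq> y" "x \<in> S e" "y \<in> V" "y \<notin> S e" using S_edge[OF e] by blast
  have xV: "x \<in> V" using xy S_sub by auto
  have N: "N_deg V E gen r (NodeP e) X = (if X = x then 1 else 0)"
  proof -
    have iff: "(X \<in> e \<and> X \<in> S e) = (X = x)" using xy by auto
    show ?thesis by (simp add: N_deg_def the_small[OF e] Let_def iff)
  qed
  have set: "{Z. small_tail V E gen r Z \<and> point_on (NodeP e) Z} = S ` {f\<in>E. x \<in> S f}"
  proof (rule set_eqI, rule iffI)
    fix Z assume "Z \<in> {Z. small_tail V E gen r Z \<and> point_on (NodeP e) Z}"
    then obtain f where f: "f \<in> E" "Z = S f" "e \<inter> S f \<noteq> {}" using small_iff by (auto simp: point_on_def)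
    have "x \<in> S f"
    proof (cases "x \<in> S f")
      case False
      then have "y \<in> S f" using f xy by auto
      then have "f \<noteq> e" using xy by auto
      then show ?thesis using S_closed_edge[of y f x] \<open>y \<in> S f\<close> e xy by (auto simp: insert_commute)
    qed simp
    then show "Z \<in> S ` {f\<in>E. x \<in> S f}" using f by auto
  next
    fix Z assume "Z \<in> S ` {f\<in>E. x \<in> S f}"
    then show "Z \<in> {Z. small_tail V E gen r Z \<and> point_on (NodeP e) Z}"
      using small_iff xy by (auto simp: point_on_def)
  qed
  show ?thesis using abel_core[OF xV XV] by (simp add: abel1_deg_def N set)
qed

end





lemma frac_bound:
  fixes w k D :: int
  assumes "D > 0" "0 \<le> w" "2 * w \<le> k * D"
  shows "0 \<le> real_of_int w / real_of_int D" "real_of_int w / real_of_int D \<le> real_of_int k / 2"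
proof -
  have D: "real_of_int D > 0" using assms by simp
  show "0 \<le> real_of_int w / real_of_int D" using assms by simp
  have "real_of_int (2 * w) \<le> real_of_int (k * D)" using assms(3) by (simp only: of_int_le_iff)
  then have "2 * real_of_int w \<le> real_of_int k * real_of_int D" by simp
  then show "real_of_int w / real_of_int D \<le> real_of_int k / 2"
    using D by (simp add: divide_le_eq field_simps)
qed

context CT begin

definition ee :: "'v \<Rightarrow> int" where "ee X = (if X = r then 1 else 0)"

lemma degY_ee: "Y \<subseteq> V \<Longrightarrow> degY ee Y = (if r \<in> Y then 1 else 0)"
proof -
  assume "Y \<subseteq> V"
  then have "finite Y" using finV finite_subset by blast
  then show ?thesis by (simp add: degY_def ee_def sum.delta)
qed

lemma D_pos: "2 * genusC V E gen - 2 > 0" using g2 by simp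

lemma ee_bound:
  assumes Y: "subcurve V Y"
  defines "Q \<equiv> real_of_int (degY ee Y) - real_of_int (degY ee V) / real_of_int (2 * genusC V E gen - 2)
                 * real_of_int (deg_omega V E gen Y)"
  shows "\<bar>Q\<bar> \<le> real_of_int (kk V E Y) / 2 \<and> (r \<in> Y \<longrightarrow> Q > - real_of_int (kk V E Y) / 2)"
proof -
  define D where "D = 2 * genusC V E gen - 2"
  define k where "k = kk V E Y"
  have D: "D > 0" using D_pos by (simp add: D_def)
  have k1: "1 \<le> k" using kk_pos Y by (simp add: k_def)
  have YV: "Y \<subseteq> V" using Y by (simp add: subcurve_def)
  have eV: "degY ee V = 1" using degY_ee[of V] rV by simp
  show ?thesis
  proof (cases "r \<in> Y")
    case False
    define w where "w = deg_omega V E gen Y"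
    have w0: "0 \<le> w" using omega_nonneg YV by (simp add: w_def)
    have "w \<le> k * (genusC V E gen - 1)" using omega_bound[OF YV False] by (simp add: w_def k_def)
    then have w2: "2 * w \<le> k * D" by (simp add: D_def algebra_simps)
    have Qe: "Q = - (real_of_int w / real_of_int D)"
      using False YV by (simp add: Q_def degY_ee eV w_def D_def)
    show ?thesis using frac_bound[OF D w0 w2] False by (simp add: Qe k_def[symmetric])
  next
    case True
    define w where "w = deg_omega V E gen (V - Y)"
    have w0: "0 \<le> w" using omega_nonneg by (simp add: w_def)
    have "kk V E (V - Y) = k" using crossing_compl YV by (simp add: kk_def k_def)
    then have "w \<le> k * (genusC V E gen - 1)" using omega_bound[of "V - Y"] True by (simp add: w_def)
    then have w2: "2 * w \<le> k * D" by (simp add: D_def algebra_simps)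
    have om: "deg_omega V E gen Y = D - w" using omega_compl[OF YV] by (simp add: w_def D_def)
    have "Q = 1 - 1 / real_of_int D * real_of_int (D - w)"
      using True YV by (simp add: Q_def degY_ee eV om D_def)
    also have "\<dots> = real_of_int w / real_of_int D" using D by (simp add: field_simps)
    finally have Qe: "Q = real_of_int w / real_of_int D" .
    have "real_of_int k > 0" using k1 by simp
    then show ?thesis using frac_bound[OF D w0 w2] by (simp add: Qe k_def[symmetric])
  qed
qed

lemma ee_qs: "quasistable V E gen r ee"
  using ee_bound by (auto simp: quasistable_def semistable_def)

lemma uniq_S:
  assumes q: "quasistable V E gen r d" and dV: "degY d V = 1" and e: "e \<in> E"
  shows "degY d (S e) = 0"
proof -
  define D where "D = 2 * genusC V E gen - 2"
  define w where "w = deg_omega V E gen (S e)"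
  define c where "c = real_of_int w / real_of_int D"
  have D: "D > 0" using D_pos by (simp add: D_def)
  have w0: "0 \<le> w" using omega_nonneg S_sub by (simp add: w_def)
  have "w \<le> genusC V E gen - 1" using omega_S[OF e] by (simp add: w_def)
  then have w2: "2 * w \<le> 1 * D" by (simp add: D_def)
  have c: "0 \<le> c" "c \<le> 1/2" using frac_bound[OF D w0 w2] by (auto simp: c_def)
  have ss: "\<bar>real_of_int (degY d (S e)) - 1 / real_of_int D * real_of_int w\<bar> \<le> 1 / 2"
    using q S_subcurve[OF e] kk_S[OF e] dV
    by (auto simp: quasistable_def semistable_def D_def w_def simp del: of_int_diff)
  have kc: "kk V E (V - S e) = 1" using kk_S[OF e] crossing_compl[OF S_sub] by (simp add: kk_def)
  have "real_of_int (degY d (V - S e)) - 1 / real_of_int D * real_of_int (deg_omega V E gen (V - S e)) > - 1 / 2"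
    using q compl_subcurve[OF e] kc dV rV r_notin_S[of e]
    by (auto simp: quasistable_def D_def simp del: of_int_diff)
  moreover have "degY d (V - S e) = 1 - degY d (S e)"
    using sum_diff[OF finV S_sub, of d e] dV by (simp add: degY_def)
  moreover have "deg_omega V E gen (V - S e) = D - w"
    using omega_compl[OF S_sub, of e] by (simp add: w_def D_def)
  ultimately have "real_of_int (1 - degY d (S e)) - 1 / real_of_int D * real_of_int (D - w) > - 1 / 2" by simp
  then have lt: "real_of_int (degY d (S e)) < c + 1/2" using D by (simp add: c_def field_simps)
  have ss': "\<bar>real_of_int (degY d (S e)) - c\<bar> \<le> 1/2" using ss by (simp add: c_def)
  have ge: "real_of_int (degY d (S e)) \<ge> c - 1/2" using abs_le_D2[OF ss'] by linarith
  have "real_of_int (degY d (S e)) < 1" "real_of_int (degY d (S e)) > -1" using lt ge c by linarith+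
  then have "degY d (S e) < 1" "degY d (S e) > -1" by simp_all
  then show ?thesis by simp
qed

lemma uniq:
  assumes q: "quasistable V E gen r d" and dV: "degY d V = 1" and XV: "X \<in> V"
  shows "d X = ee X"
proof -
  have "(\<Sum>w\<in>V. d w * ((if X = r then 1 else 0) - (if X = w then 1 else 0)))
      = (\<Sum>w\<in>V. d w * (\<Sum>f\<in>{f\<in>E. w \<in> S f}. oz f X))"
    by (rule sum.cong) (simp_all add: F8[OF XV])
  also have "\<dots> = (\<Sum>w\<in>V. \<Sum>f\<in>E. if w \<in> S f then d w * oz f X else 0)"
    by (rule sum.cong[OF refl]) (auto simp: sum_distrib_left sum.inter_filter[OF finE] intro!: sum.cong)
  also have "\<dots> = (\<Sum>f\<in>E. \<Sum>w\<in>V. if w \<in> S f then d w * oz f X else 0)" by (rule sum.swap)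
  also have "\<dots> = (\<Sum>f\<in>E. oz f X * degY d (S f))"
  proof (rule sum.cong)
    fix f assume "f \<in> E"
    have "(\<Sum>w\<in>V. if w \<in> S f then d w * oz f X else 0) = (\<Sum>w\<in>V \<inter> S f. d w * oz f X)"
      by (simp add: sum.inter_restrict[OF finV])
    also have "V \<inter> S f = S f" using S_sub by auto
    finally show "(\<Sum>w\<in>V. if w \<in> S f then d w * oz f X else 0) = oz f X * degY d (S f)"
      by (simp add: degY_def sum_distrib_left mult.commute)
  qed simp
  also have "\<dots> = 0" using uniq_S[OF q dV] by simp
  finally have z: "(\<Sum>w\<in>V. d w * ((if X = r then 1 else 0) - (if X = w then 1 else 0))) = 0" .
  have "(\<Sum>w\<in>V. d w * ((if X = r then 1 else 0) - (if X = w then 1 else 0)))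
      = (if X = r then 1 else 0) * (\<Sum>w\<in>V. d w) - (\<Sum>w\<in>V. if X = w then d w else 0)"
  proof -
    have "(\<Sum>w\<in>V. d w * ((if X = r then 1 else 0) - (if X = w then 1 else 0)))
        = (\<Sum>w\<in>V. (if X = r then 1 else 0) * d w - (if X = w then d w else 0))"
      by (rule sum.cong) (auto simp: algebra_simps)
    also have "\<dots> = (if X = r then 1 else 0) * (\<Sum>w\<in>V. d w) - (\<Sum>w\<in>V. if X = w then d w else 0)"
      by (simp only: sum_subtractf sum_distrib_left)
    finally show ?thesis .
  qed
  also have "\<dots> = (if X = r then 1 else 0) - d X"
    using dV XV finV by (simp add: degY_def sum.delta)
  finally show ?thesis using z by (simp add: ee_def)
qed

lemma qs_cong:
  assumes "\<forall>X\<in>V. d X = d' X"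
  shows "quasistable V E gen r d \<longleftrightarrow> quasistable V E gen r d'"
proof -
  have c: "Y \<subseteq> V \<Longrightarrow> degY d Y = degY d' Y" for Y
    using assms by (auto simp: degY_def intro!: sum.cong)
  show ?thesis unfolding quasistable_def semistable_def subcurve_def
    using c by (simp cong: conj_cong)
qed

end




theorem mainTheorem2:
  fixes V :: "'v set" and E :: "'v set set" and gen :: "'v \<Rightarrow> nat" and Xpr :: 'v
  assumes "compact_type V E"
    and "stable V E gen"
    and "genusC V E gen \<ge> 2"
    and "Xpr \<in> V"
    and "principal V E gen Xpr"
  defines "e1 \<equiv> (\<lambda>X. if X = Xpr then 1 else 0 :: int)"
  shows "(\<forall>d :: 'v \<Rightarrow> int. (quasistable V E gen Xpr d \<and> degY d V = 1)
              \<longleftrightarrow> (\<forall>X\<in>V. d X = e1 X))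
         \<and> semistable V E gen e1
         \<and> (\<forall>q. valid_point V E q \<longrightarrow> (\<forall>X\<in>V. abel1_deg V E gen Xpr q X = e1 X))"
proof -
  interpret CT V E gen Xpr
    by unfold_locales (rule assms)+
  have e1: "e1 = ee" by (rule ext) (simp add: e1_def ee_def)
  have A: "\<forall>d :: 'v \<Rightarrow> int. (quasistable V E gen Xpr d \<and> degY d V = 1) \<longleftrightarrow> (\<forall>X\<in>V. d X = e1 X)"
  proof (intro allI iffI)
    fix d :: "'v \<Rightarrow> int"
    assume "quasistable V E gen Xpr d \<and> degY d V = 1"
    then show "\<forall>X\<in>V. d X = e1 X" using uniq e1 by auto
  next
    fix d :: "'v \<Rightarrow> int"
    assume h: "\<forall>X\<in>V. d X = e1 X"
    then have h': "\<forall>X\<in>V. d X = ee X" using e1 by simp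
    have "quasistable V E gen Xpr d" using qs_cong[OF h'] ee_qs by simp
    moreover have "degY d V = degY ee V" using h' by (auto simp: degY_def intro!: sum.cong)
    then have "degY d V = 1" using degY_ee[of V] rV by simp
    ultimately show "quasistable V E gen Xpr d \<and> degY d V = 1" by simp
  qed
  have B: "semistable V E gen e1" using ee_qs e1 by (simp add: quasistable_def)
  have C: "\<forall>q. valid_point V E q \<longrightarrow> (\<forall>X\<in>V. abel1_deg V E gen Xpr q X = e1 X)"
  proof (intro allI impI ballI)
    fix q X assume q: "valid_point V E q" and X: "X \<in> V"
    show "abel1_deg V E gen Xpr q X = e1 X"
    proof (cases q)
      case (Smooth v)
      then show ?thesis using q X abel_smooth by (simp add: valid_point_def e1_def)
    next
      case (NodeP e)
      then show ?thesis using q X abel_node by (simp add: valid_point_def e1_def)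
    qed
  qed
  show ?thesis using A B C by blast
qed

end
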